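(* Let $S\le T_n$ be a transformation monoid and $G$ the normalizer of $S$ in $S_n$. If $a\in S$ is $\mathcal L$-related in $SG$ to an idempotent $e$ of $SG$, then $e\in S$ and $a$ is $\mathcal L$-related in $S$ to $e$.
   Context: A transformation monoid is a subsemigroup of $T_n$ containing the identity map; $G=\{g\in S_n:g^{-1}Sg=S\}$ and $SG=\{sg:s\in S,g\in G\}$, a semigroup. For a semigroup $U$, elements $a,b\in U$ are $\mathcal L$-related in $U$ if there exist $u,v\in U^1$ with $a=ub$ and $b=va$, where $U^1$ is $U$ with an identity adjoined. *)

theory Defs
  imports Main
begin

text \<open>Transformations of a finite set X (the type 'a, playing the role of {1..n}) are
  all functions X => X.  Following the usual convention in semigroup theory,
  maps act on the right: the product s g means "first s, then g", i.e. g o s.\<close>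

definition tmul :: "('a \<Rightarrow> 'a) \<Rightarrow> ('a \<Rightarrow> 'a) \<Rightarrow> ('a \<Rightarrow> 'a)" where
  "tmul s g = g \<circ> s"

definition tmonoid :: "('a \<Rightarrow> 'a) set \<Rightarrow> bool" where
  "tmonoid S \<longleftrightarrow> id \<in> S \<and> (\<forall>s\<in>S. \<forall>t\<in>S. tmul s t \<in> S)"

definition normalizer :: "('a \<Rightarrow> 'a) set \<Rightarrow> ('a \<Rightarrow> 'a) set" where
  "normalizer S = {g. bij g \<and> {tmul (tmul (inv g) s) g | s. s \<in> S} = S}"

definition SG :: "('a \<Rightarrow> 'a) set \<Rightarrow> ('a \<Rightarrow> 'a) set" where
  "SG S = {tmul s g | s g. s \<in> S \<and> g \<in> normalizer S}"

text \<open>Green's L-relation in a semigroup U of transformations: a = u b and b = v a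
  for some u, v in U^1.  Adjoining an identity to U amounts to allowing u = id.\<close>
definition L_rel :: "('a \<Rightarrow> 'a) set \<Rightarrow> ('a \<Rightarrow> 'a) \<Rightarrow> ('a \<Rightarrow> 'a) \<Rightarrow> bool" where
  "L_rel U a b \<longleftrightarrow> a \<in> U \<and> b \<in> U \<and>
     (\<exists>u \<in> insert id U. a = tmul u b) \<and> (\<exists>v \<in> insert id U. b = tmul v a)"

end

theory Submission
  imports Defs
begin

lemma comp_in:
  assumes "tmonoid S" "x \<in> S" "y \<in> S" shows "x \<circ> y \<in> S"
  using assms unfolding tmonoid_def tmul_def by auto

lemma norm_conj:
  assumes "h \<in> normalizer S" "x \<in> S" shows "inv h \<circ> x \<circ> h \<in> S"
proof -
  have b: "bij h" and eq: "{tmul (tmul (inv h) s) h | s. s \<in> S} = S"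
    using assms(1) unfolding normalizer_def by auto
  from assms(2) eq obtain s where s: "s \<in> S" "x = h \<circ> (s \<circ> inv h)"
    unfolding tmul_def by auto
  have "inv h \<circ> x \<circ> h = (inv h \<circ> h) \<circ> s \<circ> (inv h \<circ> h)"
    using s by (simp add: comp_assoc)
  also have "\<dots> = s" using b by (simp add: bij_is_inj)
  finally show ?thesis using s by simp
qed

lemma conj_pow:
  assumes "h \<in> normalizer S"
  shows "\<forall>x\<in>S. \<exists>x'\<in>S. x \<circ> h ^^ k = h ^^ k \<circ> x'"
proof (induction k)
  case 0 then show ?case by auto
next
  case (Suc k)
  have b: "bij h" using assms unfolding normalizer_def by auto
  show ?case
  proof
    fix x assume x: "x \<in> S"
    define x1 where "x1 = inv h \<circ> x \<circ> h"
    have x1S: "x1 \<in> S" using norm_conj[OF assms x] x1_def by simp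
    have "h \<circ> inv h = id" using b bij_is_surj surj_iff by blast
    then have "x \<circ> h = h \<circ> x1" unfolding x1_def by (metis comp_assoc id_comp)
    then obtain x' where "x' \<in> S" "x1 \<circ> h ^^ k = h ^^ k \<circ> x'" using Suc x1S by blast
    note e1 = this \<open>x \<circ> h = h \<circ> x1\<close>
    have "x \<circ> h ^^ Suc k = (x \<circ> h) \<circ> h ^^ k" by (simp add: comp_assoc)
    also have "\<dots> = h \<circ> (x1 \<circ> h ^^ k)" using e1 by (simp add: comp_assoc)
    also have "\<dots> = h ^^ Suc k \<circ> x'" using e1 by (simp add: comp_assoc)
    finally have "x \<circ> h ^^ Suc k = h ^^ Suc k \<circ> x'" .
    then show "\<exists>x'\<in>S. x \<circ> h ^^ Suc k = h ^^ Suc k \<circ> x'" using \<open>x' \<in> S\<close> by blast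
  qed
qed

lemma pow_prod:
  assumes "tmonoid S" "h \<in> normalizer S" "b \<in> S"
  shows "\<exists>X\<in>S. (h \<circ> b) ^^ k = h ^^ k \<circ> X"
proof (induction k)
  case 0
  have "id \<in> S" using assms(1) unfolding tmonoid_def by auto
  then show ?case by (metis funpow_0 comp_id)
next
  case (Suc k)
  then obtain X where X: "X \<in> S" "(h \<circ> b) ^^ k = h ^^ k \<circ> X" by blast
  obtain b' where b': "b' \<in> S" "b \<circ> h ^^ k = h ^^ k \<circ> b'"
    using conj_pow[OF assms(2)] assms(3) by blast
  have "(h \<circ> b) ^^ Suc k = h \<circ> (b \<circ> h ^^ k) \<circ> X" using X by (simp add: comp_assoc)
  also have "\<dots> = h ^^ Suc k \<circ> (b' \<circ> X)" using b'
    by (simp add: comp_assoc funpow_swap1)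
  finally show ?case using comp_in[OF assms(1) b'(1) X(1)] by blast
qed

lemma perm_order:
  fixes h :: "'a::finite \<Rightarrow> 'a"
  assumes "bij h" shows "\<exists>m>0. h ^^ m = id"
proof -
  have "\<not> inj (\<lambda>k::nat. h ^^ k)"
  proof
    assume "inj (\<lambda>k::nat. h ^^ k)"
    moreover have "finite (range (\<lambda>k::nat. h ^^ k))" by (rule finite)
    ultimately have "finite (UNIV :: nat set)" using finite_imageD by blast
    then show False by simp
  qed
  then obtain i j :: nat where ij: "i \<noteq> j" "h ^^ i = h ^^ j" unfolding inj_def by blast
  have main: "h ^^ (j - i) = id" if "i < j" "h ^^ i = h ^^ j" for i j
  proof -
    have "h ^^ (j - i) \<circ> h ^^ i = id \<circ> h ^^ i"
      using that funpow_add[of "j - i" i h] by simp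
    moreover have "surj (h ^^ i)" using assms bij_betw_funpow bij_is_surj by blast
    ultimately show ?thesis
    proof (intro ext)
      fix y assume A: "h ^^ (j - i) \<circ> h ^^ i = id \<circ> h ^^ i" and S: "surj (h ^^ i)"
      obtain z where "y = (h ^^ i) z" using S by (metis surjD)
      then show "(h ^^ (j - i)) y = id y" using fun_cong[OF A, of z] by simp
    qed
  qed
  show ?thesis
  proof (cases "i < j")
    case True then have "h ^^ (j - i) = id" using main ij by blast
    then show ?thesis using True by (intro exI[of _ "j - i"]) simp
  next
    case False then have "j < i" using ij by simp
    then have "h ^^ (i - j) = id" using main ij by metis
    then show ?thesis using \<open>j < i\<close> by (intro exI[of _ "i - j"]) simp
  qed
qed

theorem lemma4p3:
  fixes S :: "('a::finite \<Rightarrow> 'a) set" and a e :: "'a \<Rightarrow> 'a"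
  assumes "tmonoid S"
    and "a \<in> S"
    and "e \<in> SG S" and "tmul e e = e"
    and "L_rel (SG S) a e"
  shows "e \<in> S \<and> L_rel S a e"
proof -
  have ee: "e \<circ> e = e" using assms(4) unfolding tmul_def by simp
  obtain u where u: "a = e \<circ> u" using assms(5) unfolding L_rel_def tmul_def by blast
  have ea: "e \<circ> a = a" using u ee by (simp add: comp_assoc[symmetric])
  obtain v where v: "v \<in> insert id (SG S)" "e = a \<circ> v"
    using assms(5) unfolding L_rel_def tmul_def by blast
  have "\<exists>w\<in>S. e = a \<circ> w"
  proof (cases "v = id")
    case True then show ?thesis using v assms(1) unfolding tmonoid_def by (auto intro!: bexI[of _ id])
  next
    case False
    then obtain t h where th: "t \<in> S" "h \<in> normalizer S" "v = h \<circ> t"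
      using v unfolding SG_def tmul_def by auto
    define b where "b = t \<circ> a"
    have bS: "b \<in> S" using comp_in[OF assms(1) th(1) assms(2)] b_def by simp
    have it: "e = a \<circ> (h \<circ> b) ^^ j \<circ> h \<circ> t" for j
    proof (induction j)
      case 0 then show ?case using v th by (simp add: comp_assoc)
    next
      case (Suc j)
      have "e = e \<circ> e" using ee by simp
      also have "\<dots> = (a \<circ> h \<circ> t) \<circ> e"
        using v th by (simp add: comp_assoc)
      also have "\<dots> = a \<circ> h \<circ> t \<circ> (a \<circ> (h \<circ> b) ^^ j \<circ> h \<circ> t)"
        using Suc by (rule arg_cong)
      also have "\<dots> = a \<circ> (h \<circ> b) ^^ Suc j \<circ> h \<circ> t"
        by (simp add: b_def comp_assoc)
      finally show ?case .
    qed
    have bh: "bij h" using th(2) unfolding normalizer_def by auto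
    obtain m where m: "m > 0" "h ^^ m = id" using perm_order[OF bh] by blast
    obtain X where X: "X \<in> S" "(h \<circ> b) ^^ (m - 1) = h ^^ (m - 1) \<circ> X"
      using pow_prod[OF assms(1) th(2) bS] by blast
    obtain X' where X': "X' \<in> S" "X \<circ> h ^^ 1 = h ^^ 1 \<circ> X'"
      using conj_pow[OF th(2)] X(1) by blast
    have "e = a \<circ> (h ^^ (m - 1) \<circ> (X \<circ> h)) \<circ> t" using it[of "m - 1"] X
      by (simp add: comp_assoc)
    also have "\<dots> = a \<circ> (h ^^ (m - 1) \<circ> h) \<circ> X' \<circ> t" using X' by (simp add: comp_assoc)
    also have "h ^^ (m - 1) \<circ> h = h ^^ m" using m(1)
      by (metis Suc_diff_1 funpow_Suc_right)
    finally have "e = a \<circ> (X' \<circ> t)" using m by (simp add: comp_def)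
    then show ?thesis using comp_in[OF assms(1) X'(1) th(1)] by blast
  qed
  then obtain w where w: "w \<in> S" "e = a \<circ> w" by blast
  have eS: "e \<in> S" using comp_in[OF assms(1) assms(2) w(1)] w by simp
  have "a = tmul a e" using ea unfolding tmul_def by simp
  moreover have "e = tmul w a" using w unfolding tmul_def by simp
  ultimately show ?thesis unfolding L_rel_def using eS assms(2) w(1) by blast
qed

end
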